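(* Let $\mathcal G$ be a tree on $n\ge2$ nodes (so it has $n-1$ edges), with oriented incidence matrix $D_\tau\in\mathbb R^{n\times(n-1)}$, edge-weight matrix $W=\mathrm{diag}(w_1,\dots,w_{n-1})$, $w_l>0$, and time-scale matrix $E=\mathrm{diag}(\epsilon_1,\dots,\epsilon_n)$, $\epsilon_i>0$; let $L_{e,s}^\tau=D_\tau^TE^{-1}D_\tau$ and $\sigma_w,\sigma_v$ real scalars. Consider $$\tilde\Sigma_\tau(s)=\big(sI+L_{e,s}^\tau W\big)^{-1}\begin{bmatrix}\sigma_wD_\tau^TE^{-1/2} & -\sigma_vL_{e,s}^\tau W^{1/2}\end{bmatrix},\qquad \Pi_\tau(s)=W^{1/2}\tilde\Sigma_\tau(s).$$ Then $$\|\tilde\Sigma_\tau\|_\infty^2=\bar\sigma\big(\sigma_w^2(WL_{e,s}^\tau W)^{-1}+\sigma_v^2W^{-1}\big),\qquad \|\Pi_\tau\|_\infty^2=\sigma_w^2\,\bar\sigma\big((W^{1/2}L_{e,s}^\tau W^{1/2})^{-1}\big)+\sigma_v^2.$$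
   Context: The incidence matrix of a graph with an arbitrary orientation of each edge has entry $1$ in row $i$, column $l$ if node $i$ is the initial node of edge $l$, $-1$ if it is the terminal node, and $0$ otherwise. Powers of positive diagonal matrices are taken entrywise. For a stable transfer matrix $\Phi(s)$, $\|\Phi\|_\infty=\sup_{\omega\in\mathbb R}\bar\sigma(\Phi(j\omega))$ where $\bar\sigma$ is the largest singular value. (This is the general edge-consensus model with $R=I$, which is the case when the graph is its own spanning tree.) *)

theory Defs
  imports "HOL-Analysis.Analysis"
begin

text \<open>Nodes are indexed by a finite type 'n, edges by a finite type 'e.
  An oriented graph is given by src l (initial node) and tgt l (terminal node) of edge l.\<close>

definition incidence :: "('e::finite \<Rightarrow> 'n::finite) \<Rightarrow> ('e \<Rightarrow> 'n) \<Rightarrow> real^'e^'n" where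
  "incidence src tgt = (\<chi> i l. if i = src l then 1 else if i = tgt l then -1 else 0)"

definition is_tree :: "('e::finite \<Rightarrow> 'n::finite) \<Rightarrow> ('e \<Rightarrow> 'n) \<Rightarrow> bool" where
  "is_tree src tgt \<longleftrightarrow> (\<forall>l. src l \<noteq> tgt l) \<and> CARD('e) + 1 = CARD('n) \<and>
     (\<forall>i j. (i, j) \<in> ({(src l, tgt l) | l. True} \<union> {(tgt l, src l) | l. True})\<^sup>*)"

definition diag :: "('n::finite \<Rightarrow> real) \<Rightarrow> real^'n^'n" where
  "diag d = (\<chi> i j. if i = j then d i else 0)"

definition cmat :: "real^'b^'a \<Rightarrow> complex^'b^'a" where
  "cmat A = (\<chi> i j. complex_of_real (A $ i $ j))"

definition hcat :: "'x^'b^'a \<Rightarrow> 'x^'c^'a \<Rightarrow> 'x^('b + 'c)^'a" where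
  "hcat A B = (\<chi> i k. case k of Inl j \<Rightarrow> A $ i $ j | Inr j \<Rightarrow> B $ i $ j)"

definition cadj :: "complex^'b^'a \<Rightarrow> complex^'a^'b" where
  "cadj A = (\<chi> i j. cnj (A $ j $ i))"

definition sigma_max :: "complex^'b::finite^'a::finite \<Rightarrow> real" where
  "sigma_max M = sqrt (Max {x::real. \<exists>v. v \<noteq> 0 \<and> (cadj M ** M) *v v = complex_of_real x *s v})"

definition hinf_norm :: "(complex \<Rightarrow> complex^'b::finite^'a::finite) \<Rightarrow> real" where
  "hinf_norm \<Phi> = (SUP \<omega>::real. sigma_max (\<Phi> (\<i> * complex_of_real \<omega>)))"

end

theory Submission
  imports Defs
begin

definition hp :: "complex^'n::finite \<Rightarrow> complex^'n \<Rightarrow> complex" where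
  "hp u v = (\<Sum>i\<in>UNIV. cnj (u$i) * v$i)"

lemma inner_hp: "inner u v = Re (hp u v)"
  by (simp add: hp_def inner_vec_def inner_complex_def Re_sum)

lemma Im_hp_self: "Im (hp v v) = 0"
  by (simp add: hp_def Im_sum algebra_simps)

lemma hp_self: "hp v v = complex_of_real ((norm v)\<^sup>2)"
  by (metis Im_hp_self complex_eq_iff Im_complex_of_real Re_complex_of_real inner_hp power2_norm_eq_inner)

lemma hp_adj: "hp u (cadj A *v w) = hp (A *v u) w"
proof -
  have "hp u (cadj A *v w) = (\<Sum>i\<in>UNIV. \<Sum>j\<in>UNIV. cnj (u$i) * cnj (A$j$i) * w$j)"
    unfolding hp_def cadj_def matrix_vector_mult_def by (simp add: sum_distrib_left mult_ac)
  also have "\<dots> = (\<Sum>j\<in>UNIV. \<Sum>i\<in>UNIV. cnj (u$i) * cnj (A$j$i) * w$j)"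
    by (rule sum.swap)
  also have "\<dots> = hp (A *v u) w"
    unfolding hp_def matrix_vector_mult_def by (simp add: cnj_sum sum_distrib_right sum_distrib_left mult_ac)
  finally show ?thesis .
qed

lemma inner_adj: "inner u (cadj A *v w) = inner (A *v u) w"
  by (simp add: inner_hp hp_adj)

lemma inner_adj2: "inner (cadj A *v w) u = inner w (A *v u)"
  by (metis inner_adj inner_commute)

lemma cadj_cadj[simp]: "cadj (cadj A) = A"
  by (simp add: cadj_def vec_eq_iff)

lemma cadj_mult: "cadj (A ** B) = cadj B ** cadj A"
  by (simp add: cadj_def vec_eq_iff matrix_matrix_mult_def cnj_sum mult_ac)

lemma mv_scaleR: "(A::complex^'b::finite^'a::finite) *v (t *\<^sub>R v) = t *\<^sub>R (A *v v)"
  by (simp add: matrix_vector_mult_def vec_eq_iff scaleR_sum_right mult_scaleR_right)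

lemma ofreal_scale: "complex_of_real x *s (v::complex^'n) = x *\<^sub>R v"
  by (auto simp: vec_eq_iff) (simp add: scaleR_conv_of_real)

definition opn :: "complex^'b::finite^'a::finite \<Rightarrow> real \<Rightarrow> bool" where
  "opn A s \<longleftrightarrow> s \<ge> 0 \<and> (\<forall>v. norm (A *v v) \<le> s * norm v) \<and> (\<exists>v. v \<noteq> 0 \<and> norm (A *v v) = s * norm v)"

lemma opn_exists: "\<exists>s. opn (A::complex^'b::finite^'a::finite) s"
proof -
  let ?S = "sphere (0::complex^'b) 1"
  have "axis undefined 1 \<in> ?S" using norm_axis_1[of undefined] by (simp add: sphere_def)
  then have ne: "?S \<noteq> {}" by blast
  have cont: "continuous_on ?S (\<lambda>v. norm (A *v v))"
    by (intro continuous_on_norm linear_continuous_on matrix_vector_mul_bounded_linear)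
  obtain v1 where v1: "v1 \<in> ?S" and mx: "\<And>v. v \<in> ?S \<Longrightarrow> norm (A *v v) \<le> norm (A *v v1)"
    using compact_attains_sup[OF compact_continuous_image[OF cont compact_sphere]] ne by auto
  define s where "s = norm (A *v v1)"
  have n1: "norm v1 = 1" using v1 by simp
  have bound: "norm (A *v v) \<le> s * norm v" for v
  proof (cases "v = 0")
    case True then show ?thesis by simp
  next
    case False
    then have nv: "norm v > 0" by simp
    have "(1 / norm v) *\<^sub>R v \<in> ?S" using nv by simp
    then have "norm (A *v ((1 / norm v) *\<^sub>R v)) \<le> s" using mx s_def by blast
    then have "norm (A *v v) / norm v \<le> s" by (simp add: mv_scaleR)
    then show ?thesis using nv by (simp add: divide_le_eq mult.commute)
  qed
  have "v1 \<noteq> 0" using n1 by auto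
  moreover have "norm (A *v v1) = s * norm v1" using n1 s_def by simp
  ultimately have "opn A s" unfolding opn_def using bound s_def by auto
  then show ?thesis by blast
qed

lemma opn_unique: "opn A s \<Longrightarrow> opn A t \<Longrightarrow> s = t"
proof -
  have le: "s \<le> t" if "opn A s" "opn A t" for s t
  proof -
    from that(1) obtain v where v: "v \<noteq> 0" "norm (A *v v) = s * norm v" unfolding opn_def by blast
    have "s * norm v \<le> t * norm v" using that(2) v unfolding opn_def by metis
    then show ?thesis using v(1) by simp
  qed
  assume "opn A s" "opn A t" then show ?thesis using le by (meson antisym)
qed

lemma quad_zero:
  fixes a b :: real
  assumes "\<And>t. 2 * t * a + t\<^sup>2 * b \<le> 0"
  shows "a = 0"
proof (rule ccontr)
  assume a: "a \<noteq> 0"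
  define t where "t = a / (\<bar>b\<bar> + 1)"
  have tp: "\<bar>b\<bar> + 1 > 0" by simp
  have a_eq: "a = t * (\<bar>b\<bar> + 1)" using tp by (simp add: t_def)
  have tb: "\<bar>t * b\<bar> \<le> \<bar>a\<bar>"
  proof -
    have "\<bar>t * b\<bar> = \<bar>t\<bar> * \<bar>b\<bar>" by (simp add: abs_mult)
    also have "\<dots> \<le> \<bar>t\<bar> * (\<bar>b\<bar> + 1)" by (simp add: mult_left_mono)
    also have "\<dots> = \<bar>a\<bar>" using a_eq tp by (simp add: abs_mult)
    finally show ?thesis .
  qed
  have "t * (2 * a + t * b) > 0"
  proof (cases "a > 0")
    case True
    then have "t > 0" using tp by (simp add: t_def)
    moreover have "2 * a + t * b > 0" using tb True by linarith
    ultimately show ?thesis by simp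
  next
    case False
    then have "a < 0" using a by simp
    then have "t < 0" using tp by (simp add: t_def divide_neg_pos)
    moreover have "2 * a + t * b < 0" using tb \<open>a < 0\<close> by linarith
    ultimately show ?thesis by (simp add: mult_neg_neg)
  qed
  then have "2 * t * a + t\<^sup>2 * b > 0" by (simp add: power2_eq_square algebra_simps)
  with assms[of t] show False by linarith
qed

lemma norm_add_scale_sq:
  fixes a b :: "'a::real_inner"
  shows "(norm (a + t *\<^sub>R b))\<^sup>2 = (norm a)\<^sup>2 + 2 * t * inner a b + t\<^sup>2 * (norm b)\<^sup>2"
proof -
  have "(norm (a + t *\<^sub>R b))\<^sup>2 = inner (a + t *\<^sub>R b) (a + t *\<^sub>R b)" by (simp add: power2_norm_eq_inner)
  also have "\<dots> = inner a a + 2 * t * inner a b + t\<^sup>2 * inner b b"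
    by (simp add: inner_add_left inner_add_right inner_commute power2_eq_square algebra_simps)
  also have "\<dots> = (norm a)\<^sup>2 + 2 * t * inner a b + t\<^sup>2 * (norm b)\<^sup>2" by (simp add: power2_norm_eq_inner)
  finally show ?thesis .
qed

lemma opn_sigma:
  fixes A :: "complex^'b::finite^'a::finite"
  assumes "opn A s"
  shows "sigma_max A = s"
proof -
  have s0: "s \<ge> 0" and bd: "\<And>v. norm (A *v v) \<le> s * norm v" using assms unfolding opn_def by auto
  obtain v0 where v0: "v0 \<noteq> 0" "norm (A *v v0) = s * norm v0" using assms unfolding opn_def by auto
  let ?H = "cadj A ** A"
  let ?E = "{x::real. \<exists>v. v \<noteq> 0 \<and> ?H *v v = complex_of_real x *s v}"
  have Hv: "?H *v v = cadj A *v (A *v v)" for v by (simp add: matrix_vector_mul_assoc)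
  have Hsym: "inner (?H *v a) b = inner a (?H *v b)" for a b
    by (simp add: Hv inner_adj2 inner_adj inner_commute)
  have quad: "inner v (?H *v v) = (norm (A *v v))\<^sup>2" for v
    by (simp add: Hv inner_adj power2_norm_eq_inner)
  have ub: "x \<le> s\<^sup>2" if xE: "x \<in> ?E" for x
  proof -
    obtain v where v: "v \<noteq> 0" "?H *v v = x *\<^sub>R v" using xE by (auto simp: ofreal_scale)
    have "x * (norm v)\<^sup>2 = (norm (A *v v))\<^sup>2"
      using quad[of v] v by (simp add: power2_norm_eq_inner)
    also have "\<dots> \<le> (s * norm v)\<^sup>2" using bd[of v] by (simp add: power_mono)
    finally have "x * (norm v)\<^sup>2 \<le> s\<^sup>2 * (norm v)\<^sup>2" by (simp add: power_mult_distrib)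
    then show ?thesis using v(1) by simp
  qed
  have key: "inner (?H *v v0 - s\<^sup>2 *\<^sub>R v0) u = 0" for u
  proof -
    have "2 * t * (inner (?H *v v0 - s\<^sup>2 *\<^sub>R v0) u) + t\<^sup>2 * ((norm (A *v u))\<^sup>2 - s\<^sup>2 * (norm u)\<^sup>2) \<le> 0" for t
    proof -
      have "(norm (A *v (v0 + t *\<^sub>R u)))\<^sup>2 \<le> (s * norm (v0 + t *\<^sub>R u))\<^sup>2"
        using bd[of "v0 + t *\<^sub>R u"] by (simp add: power_mono)
      moreover have "(norm (A *v (v0 + t *\<^sub>R u)))\<^sup>2 = (norm (A *v v0))\<^sup>2 + 2 * t * inner (A *v v0) (A *v u) + t\<^sup>2 * (norm (A *v u))\<^sup>2"
        by (simp add: matrix_vector_right_distrib mv_scaleR norm_add_scale_sq)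
      moreover have "(s * norm (v0 + t *\<^sub>R u))\<^sup>2 = s\<^sup>2 * ((norm v0)\<^sup>2 + 2 * t * inner v0 u + t\<^sup>2 * (norm u)\<^sup>2)"
        by (simp add: power_mult_distrib norm_add_scale_sq)
      moreover have "inner (A *v v0) (A *v u) = inner (?H *v v0) u"
        by (simp add: Hv inner_adj2)
      moreover have "(norm (A *v v0))\<^sup>2 = s\<^sup>2 * (norm v0)\<^sup>2" using v0 by (simp add: power_mult_distrib)
      ultimately show ?thesis by (simp add: inner_diff_left algebra_simps)
    qed
    then show ?thesis by (rule quad_zero)
  qed
  have "?H *v v0 - s\<^sup>2 *\<^sub>R v0 = 0" using key[of "?H *v v0 - s\<^sup>2 *\<^sub>R v0"] by simp
  then have "?H *v v0 = complex_of_real (s\<^sup>2) *s v0" by (simp only: ofreal_scale) simp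
  then have mem: "s\<^sup>2 \<in> ?E" using v0(1) by blast
  define f where "f x = (SOME v. v \<noteq> 0 \<and> ?H *v v = complex_of_real x *s v)" for x
  have f: "f x \<noteq> 0 \<and> ?H *v f x = x *\<^sub>R f x" if "x \<in> ?E" for x
    using someI_ex[OF that[simplified]] unfolding f_def ofreal_scale by blast
  have orth: "pairwise orthogonal (f ` ?E)"
  proof (rule pairwiseI)
    fix a b assume ab: "a \<in> f ` ?E" "b \<in> f ` ?E" "a \<noteq> b"
    then obtain x y where xy: "x \<in> ?E" "y \<in> ?E" "f x \<noteq> f y" and a: "a = f x" and b: "b = f y"
      by blast
    have "x \<noteq> y" using xy(3) by blast
    have "x * inner (f x) (f y) = inner (?H *v f x) (f y)" using f[OF xy(1)] by simp
    also have "\<dots> = inner (f x) (?H *v f y)" by (rule Hsym)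
    also have "\<dots> = y * inner (f x) (f y)" using f[OF xy(2)] by simp
    finally show "orthogonal a b" using \<open>x \<noteq> y\<close> a b unfolding orthogonal_def by simp
  qed
  have "inj_on f ?E"
  proof (rule inj_onI)
    fix x y assume xy: "x \<in> ?E" "y \<in> ?E" "f x = f y"
    then have "x *\<^sub>R f x = y *\<^sub>R f x" using f[OF xy(1)] f[OF xy(2)] by metis
    then show "x = y" using f[OF xy(1)] by (simp add: scaleR_cancel_right)
  qed
  then have fin: "finite ?E"
    using finite_imageD pairwise_orthogonal_imp_finite[OF orth] by blast
  have "Max ?E = s\<^sup>2" by (rule Max_eqI[OF fin ub mem])
  then show ?thesis unfolding sigma_max_def using s0 by simp
qed

lemma opn_sigma_max: "opn A (sigma_max A)"
  using opn_exists[of A] opn_sigma by metis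

lemma sigma_bound: "norm (A *v v) \<le> sigma_max A * norm v"
  using opn_sigma_max[of A] unfolding opn_def by blast

lemma sigma_nonneg: "sigma_max A \<ge> 0"
  using opn_sigma_max[of A] unfolding opn_def by blast

lemma sigma_le:
  assumes "\<And>v. norm (A *v v) \<le> c * norm v"
  shows "sigma_max A \<le> c"
proof -
  obtain v where v: "v \<noteq> 0" "norm (A *v v) = sigma_max A * norm v"
    using opn_sigma_max[of A] unfolding opn_def by blast
  then have "sigma_max A * norm v \<le> c * norm v" using assms by metis
  then show ?thesis using v(1) by simp
qed

lemma sigma_adj_le: "sigma_max A \<le> sigma_max (cadj A)"
proof (rule sigma_le)
  fix v
  let ?s = "sigma_max (cadj A)"
  have "(norm (A *v v))\<^sup>2 = inner v (cadj A *v (A *v v))"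
    by (simp add: inner_adj power2_norm_eq_inner)
  also have "\<dots> \<le> norm v * norm (cadj A *v (A *v v))" by (rule norm_cauchy_schwarz)
  also have "\<dots> \<le> norm v * (?s * norm (A *v v))" by (simp add: sigma_bound mult_left_mono)
  finally have *: "(norm (A *v v))\<^sup>2 \<le> (?s * norm v) * norm (A *v v)" by (simp add: mult_ac)
  show "norm (A *v v) \<le> ?s * norm v"
  proof (cases "norm (A *v v) = 0")
    case True then show ?thesis using sigma_nonneg[of "cadj A"] by simp
  next
    case False then show ?thesis using * by (simp add: power2_eq_square)
  qed
qed

lemma sigma_adj: "sigma_max (cadj A) = sigma_max A"
  using sigma_adj_le[of A] sigma_adj_le[of "cadj A"] by simp

lemma sigma_AAH: "sigma_max (A ** cadj A) = (sigma_max A)\<^sup>2"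
proof -
  let ?s = "sigma_max A"
  have sa: "sigma_max (cadj A) = ?s" by (rule sigma_adj)
  have bd: "norm ((A ** cadj A) *v v) \<le> ?s\<^sup>2 * norm v" for v
  proof -
    have "norm ((A ** cadj A) *v v) = norm (A *v (cadj A *v v))" by (simp add: matrix_vector_mul_assoc)
    also have "\<dots> \<le> ?s * norm (cadj A *v v)" by (rule sigma_bound)
    also have "\<dots> \<le> ?s * (?s * norm v)" using sigma_bound[of "cadj A" v] sa sigma_nonneg[of A] by (simp add: mult_left_mono)
    finally show ?thesis by (simp add: power2_eq_square mult_ac)
  qed
  obtain v where v: "v \<noteq> 0" "norm (cadj A *v v) = ?s * norm v"
    using opn_sigma_max[of "cadj A"] sa unfolding opn_def by auto
  have "(?s * norm v)\<^sup>2 = inner v (A *v (cadj A *v v))"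
    using v(2) by (metis inner_adj2 cadj_cadj power2_norm_eq_inner inner_commute)
  also have "\<dots> \<le> norm v * norm (A *v (cadj A *v v))" by (rule norm_cauchy_schwarz)
  finally have "?s\<^sup>2 * norm v * norm v \<le> norm v * norm ((A ** cadj A) *v v)"
    by (simp add: power_mult_distrib power2_eq_square matrix_vector_mul_assoc mult_ac)
  then have "?s\<^sup>2 * norm v \<le> norm ((A ** cadj A) *v v)" using v(1) by (simp add: mult_ac)
  then have "norm ((A ** cadj A) *v v) = ?s\<^sup>2 * norm v" using bd[of v] by linarith
  then have "opn (A ** cadj A) (?s\<^sup>2)" unfolding opn_def using bd v(1) by auto
  then show ?thesis by (rule opn_sigma)
qed

lemma incidence_T:
  assumes "\<forall>l. src l \<noteq> tgt l"
  shows "(transpose (incidence src tgt) *v y) $ l = y $ src l - y $ tgt l"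
proof -
  have "(transpose (incidence src tgt) *v y) $ l =
        (\<Sum>i\<in>UNIV. (if i = src l then y $ i else 0) - (if i = tgt l then y $ i else 0))"
    unfolding incidence_def transpose_def matrix_vector_mult_def using assms
    by (auto intro!: sum.cong)
  also have "\<dots> = y $ src l - y $ tgt l" by (simp add: sum_subtractf)
  finally show ?thesis .
qed

lemma inner_mv_transpose: "inner ((A::real^'b::finite^'a::finite) *v x) y = inner x (transpose A *v y)"
  by (metis dot_lmul_matrix transpose_matrix_vector transpose_transpose vector_transpose_matrix)

lemma tree_D_inj:
  assumes tree: "is_tree src tgt"
  shows "incidence src tgt *v (x::real^'e::finite) = (0::real^'n::finite) \<Longrightarrow> x = 0"
proof -
  let ?D = "incidence src tgt"
  have nl: "\<forall>l. src l \<noteq> tgt l" and card: "CARD('e) + 1 = CARD('n)"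
    and conn: "\<forall>i j. (i, j) \<in> ({(src l, tgt l) | l. True} \<union> {(tgt l, src l) | l. True})\<^sup>*"
    using tree unfolding is_tree_def by auto
  define one :: "real^'n" where "one = (\<chi> i. 1)"
  let ?K = "{y \<in> UNIV. \<forall>x \<in> range ((*v) ?D). orthogonal x y}"
  have K: "?K = span {one}"
  proof (intro set_eqI iffI)
    fix y assume "y \<in> ?K"
    then have "inner x (transpose ?D *v y) = 0" for x
      by (auto simp: orthogonal_def inner_mv_transpose)
    then have "transpose ?D *v y = 0" by (metis inner_eq_zero_iff)
    then have e: "y $ src l = y $ tgt l" for l using incidence_T[OF nl, of y l] by simp
    have "(i, j) \<in> ({(src l, tgt l) | l. True} \<union> {(tgt l, src l) | l. True})\<^sup>* \<Longrightarrow> y $ i = y $ j" for i j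
    proof (induction rule: rtrancl_induct)
      case base then show ?case by simp
    next
      case (step b c) then show ?case using e by auto
    qed
    then have "y $ i = y $ j" for i j using conn by blast
    then have "y = (y $ undefined) *\<^sub>R one" by (auto simp: vec_eq_iff one_def)
    then show "y \<in> span {one}" by (metis span_singleton rangeI)
  next
    fix y assume "y \<in> span {one}"
    then obtain c where y: "y = c *\<^sub>R one" by (auto simp: span_singleton)
    have "(transpose ?D *v y) $ l = 0" for l by (simp only: incidence_T[OF nl]) (simp add: y one_def)
    then have "transpose ?D *v y = 0" by (simp only: vec_eq_iff) simp
    then show "y \<in> ?K" by (auto simp: orthogonal_def inner_mv_transpose)
  qed
  have one0: "one \<noteq> 0" by (simp add: one_def vec_eq_iff)
  have dK: "dim ?K = 1" using one0 by (simp only: K dim_span) simp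
  have "dim ?K + dim (range ((*v) ?D)) = dim (UNIV::(real^'n) set)"
    by (rule dim_subspace_orthogonal_to_vectors)
       (auto intro: linear_subspace_image[OF matrix_vector_mul_linear subspace_UNIV, simplified])
  then have "dim (range ((*v) ?D)) = CARD('e)" using dK card by simp
  then have "rank ?D = CARD('e)" by (simp add: rank_dim_range)
  then have "inj ((*v) ?D)" by (simp add: full_rank_injective)
  then show "?D *v x = 0 \<Longrightarrow> x = 0" by (metis matrix_vector_mult_0_right injD)
qed

lemma diag_mult: "diag a ** diag b = diag (\<lambda>i. a i * b i)"
proof -
  have "(\<Sum>k\<in>UNIV. (if i = k then a i else 0) * (if k = j then b k else 0)) = (if i = j then a i * b i else 0)" for i j
  proof -
    have "(\<Sum>k\<in>UNIV. (if i = k then a i else 0) * (if k = j then b k else 0)) = (\<Sum>k\<in>UNIV. if k = i then a i * (if i = j then b i else 0) else 0)"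
      by (rule sum.cong) auto
    then show ?thesis by simp
  qed
  then show ?thesis by (simp add: diag_def matrix_matrix_mult_def vec_eq_iff)
qed

lemma diag_T[simp]: "transpose (diag a) = diag a"
  by (simp add: diag_def transpose_def vec_eq_iff)

lemma diag_mv: "diag a *v x = (\<chi> i. a i * x $ i)"
proof -
  have "(\<Sum>k\<in>UNIV. (if i = k then a i else 0) * x $ k) = a i * x $ i" for i
  proof -
    have "(\<Sum>k\<in>UNIV. (if i = k then a i else 0) * x $ k) = (\<Sum>k\<in>UNIV. if k = i then a i * x $ i else 0)"
      by (rule sum.cong) auto
    then show ?thesis by simp
  qed
  then show ?thesis by (simp add: diag_def matrix_vector_mult_def vec_eq_iff)
qed

lemma diag_one: "(\<And>i. a i = 1) \<Longrightarrow> diag a = mat 1"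
  by (simp add: diag_def mat_def vec_eq_iff)

lemma diag_mult_eq: "(\<And>i. a i * b i = c i) \<Longrightarrow> diag a ** diag b = diag c"
  by (simp add: diag_mult)

lemma cancel_r: "(A::'a::semiring_1^'n^'n) ** B = mat 1 \<Longrightarrow> A ** (B ** X) = X"
  by (simp add: matrix_mul_assoc)

lemma cmat_mult: "cmat (A ** B) = cmat A ** cmat B"
  by (simp add: cmat_def matrix_matrix_mult_def vec_eq_iff)

lemma cmat_add: "cmat (A + B) = cmat A + cmat B"
  by (simp add: cmat_def vec_eq_iff)

lemma cmat_scaleR: "cmat (r *\<^sub>R A) = r *\<^sub>R cmat A"
  by (auto simp: cmat_def vec_eq_iff) (simp add: of_real_def)

lemma cmat_mat1: "cmat (mat 1) = mat 1"
  by (simp add: cmat_def mat_def vec_eq_iff)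

lemma cadj_cmat: "cadj (cmat A) = cmat (transpose A)"
  by (simp add: cadj_def cmat_def transpose_def vec_eq_iff)

lemma cadj_add: "cadj (A + B) = cadj A + cadj B"
  by (simp add: cadj_def vec_eq_iff)

lemma cadj_mat: "cadj (mat c) = mat (cnj c)"
  by (simp add: cadj_def mat_def vec_eq_iff)

lemma mat_mv: "mat c *v (x::'a::comm_semiring_1^'n) = c *s x"
proof -
  have "(\<Sum>k\<in>UNIV. (if i = k then c else 0) * x $ k) = c * x $ i" for i
  proof -
    have "(\<Sum>k\<in>UNIV. (if i = k then c else 0) * x $ k) = (\<Sum>k\<in>UNIV. if k = i then c * x $ i else 0)"
      by (rule sum.cong) auto
    then show ?thesis by simp
  qed
  then show ?thesis by (simp add: mat_def matrix_vector_mult_def vec_eq_iff)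
qed

lemma cmv_scaleR: "(r *\<^sub>R (A::complex^'b^'a)) *v v = r *\<^sub>R (A *v v)"
  by (simp add: matrix_vector_mult_def vec_eq_iff scaleR_sum_right)

lemma cmv_smult: "(A::complex^'b^'a) *v (c *s v) = c *s (A *v v)"
  by (rule vector_scalar_commute)

lemma hcat_left: "Z ** hcat A B = hcat (Z ** A) (Z ** B)"
  by (simp add: hcat_def matrix_matrix_mult_def vec_eq_iff split: sum.split)

lemma cmat_hcat: "cmat (hcat A B) = hcat (cmat A) (cmat B)"
  by (simp add: hcat_def cmat_def vec_eq_iff split: sum.split)

lemma sum_UNIV_Plus: "(\<Sum>k\<in>(UNIV::('b::finite + 'c::finite) set). f k) = (\<Sum>j\<in>UNIV. f (Inl j)) + (\<Sum>j\<in>UNIV. f (Inr j))"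
  by (simp add: sum.Plus[of UNIV UNIV, unfolded UNIV_Plus_UNIV] comp_def)

lemma hcat_T: "hcat A B ** transpose (hcat C E) = A ** transpose C + B ** transpose (E::'a::comm_semiring_1^'c::finite^'m)"
  by (simp add: hcat_def matrix_matrix_mult_def transpose_def vec_eq_iff sum_UNIV_Plus)

lemma norm_sq_vec: "(norm (v::'a::real_normed_vector^'n)) ^ 2 = (\<Sum>i\<in>UNIV. (norm (v $ i)) ^ 2)"
  by (simp add: norm_vec_def L2_set_def sum_nonneg)

lemma cadj_hcat_mv: "cadj (hcat X Y) *v u = (\<chi> k. case k of Inl j \<Rightarrow> (cadj X *v u) $ j | Inr j \<Rightarrow> (cadj Y *v u) $ j)"
  by (simp add: vec_eq_iff cadj_def hcat_def matrix_vector_mult_def split: sum.split)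

lemma norm_cadj_hcat: "(norm (cadj (hcat X Y) *v u))\<^sup>2 = (norm (cadj X *v u))\<^sup>2 + (norm (cadj Y *v u))\<^sup>2"
  by (simp only: cadj_hcat_mv norm_sq_vec sum_UNIV_Plus) simp

lemma hp_cnj: "cnj (hp u v) = hp v u"
  by (simp add: hp_def cnj_sum mult.commute)

lemma hp_cmat: "hp (cmat A *v y) (cmat B *v z) = hp y (cmat (transpose A ** B) *v z)"
  by (metis hp_adj cadj_cmat cmat_mult matrix_vector_mul_assoc)

lemma hp_sym_real:
  assumes "transpose S = S"
  shows "Im (hp x (cmat S *v x)) = 0"
proof -
  have "hp x (cmat S *v x) = hp (cmat S *v x) x"
    by (metis hp_adj cadj_cmat assms)
  also have "\<dots> = cnj (hp x (cmat S *v x))" by (simp add: hp_cnj)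
  finally have "Im (hp x (cmat S *v x)) = Im (cnj (hp x (cmat S *v x)))" by simp
  then show ?thesis by simp
qed

lemma hp_add_right: "hp u (v + w) = hp u v + hp u w"
  by (simp add: hp_def sum.distrib algebra_simps)

lemma hp_smult_right: "hp u (c *s v) = c * hp u v"
  by (simp add: hp_def sum_distrib_left mult_ac)

lemma hp_add_left: "hp (v + w) u = hp v u + hp w u"
  by (simp add: hp_def sum.distrib algebra_simps)

lemma hp_smult_left: "hp (c *s v) u = cnj c * hp v u"
  by (simp add: hp_def sum_distrib_left mult_ac)

lemma norm_sq_hp: "(norm v)\<^sup>2 = Re (hp v v)"
  by (simp add: hp_self)

lemma norm_shift_ge:
  assumes "Im (hp a b) = 0" "Re c = 0"
  shows "(norm a)\<^sup>2 \<le> (norm (a + c *s b))\<^sup>2"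
proof -
  have "hp (a + c *s b) (a + c *s b) = hp a a + c * hp a b + cnj c * hp b a + cnj c * c * hp b b"
    by (simp add: hp_add_left hp_add_right hp_smult_left hp_smult_right algebra_simps)
  moreover have "hp b a = cnj (hp a b)" by (simp add: hp_cnj)
  moreover have "Re (c * hp a b) = 0" using assms by simp
  moreover have "Re (cnj c * cnj (hp a b)) = 0" using assms by simp
  moreover have "Re (cnj c * c * hp b b) \<ge> 0"
  proof -
    have cc: "cnj c * c = complex_of_real ((cmod c)\<^sup>2)"
      by (metis complex_norm_square mult.commute of_real_power)
    have "cnj c * c * hp b b = complex_of_real ((cmod c)\<^sup>2 * (norm b)\<^sup>2)"
      by (simp only: cc hp_self of_real_mult)
    then show ?thesis by simp
  qed
  ultimately have "Re (hp (a + c *s b) (a + c *s b)) \<ge> Re (hp a a)" by simp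
  then show ?thesis by (simp add: norm_sq_hp)
qed

lemma invertible_inv: "invertible A \<Longrightarrow> A ** matrix_inv A = mat 1 \<and> matrix_inv A ** A = mat 1"
  unfolding invertible_def matrix_inv_def by (rule someI_ex)

lemma minv:
  fixes A :: "'a::field^'n::finite^'n"
  assumes "A ** B = mat 1"
  shows "matrix_inv A = B"
proof -
  have "invertible A" using assms invertible_right_inverse by blast
  then have i: "matrix_inv A ** A = mat 1" using invertible_inv by blast
  have "matrix_inv A = matrix_inv A ** (A ** B)" using assms by simp
  also have "\<dots> = B" by (simp add: matrix_mul_assoc i)
  finally show ?thesis .
qed

lemma matrix_add_rdistrib: "(A + B) ** C = A ** C + B ** (C::'a::semiring_1^'c^'b)"
  by (simp add: matrix_matrix_mult_def vec_eq_iff distrib_right sum.distrib)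

lemma cmat_diag_mv: "cmat (diag a) *v x = (\<chi> i. complex_of_real (a i) * x $ i)"
proof -
  have "(\<Sum>k\<in>UNIV. complex_of_real (if i = k then a i else 0) * x $ k) = complex_of_real (a i) * x $ i" for i
  proof -
    have "(\<Sum>k\<in>UNIV. complex_of_real (if i = k then a i else 0) * x $ k) = (\<Sum>k\<in>UNIV. if k = i then complex_of_real (a i) * x $ i else 0)"
      by (rule sum.cong) auto
    then show ?thesis by simp
  qed
  then show ?thesis by (simp add: diag_def cmat_def matrix_vector_mult_def vec_eq_iff)
qed

lemma hp_diag: "hp x (cmat (diag a) *v x) = complex_of_real (\<Sum>i\<in>UNIV. a i * (cmod (x $ i))\<^sup>2)"
proof -
  have "cnj (x $ i) * (complex_of_real (a i) * x $ i) = complex_of_real (a i * (cmod (x $ i))\<^sup>2)" for i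
  proof -
    have "cnj (x $ i) * x $ i = complex_of_real ((cmod (x $ i))\<^sup>2)"
      by (metis complex_norm_square mult.commute of_real_power)
    then show ?thesis by (simp add: mult_ac)
  qed
  then have "hp x (cmat (diag a) *v x) = (\<Sum>i\<in>UNIV. complex_of_real (a i * (cmod (x $ i))\<^sup>2))"
    unfolding hp_def cmat_diag_mv by (intro sum.cong) simp_all
  then show ?thesis by (simp only: of_real_sum)
qed

lemma sqrt_div: assumes a: "0 < (a::real)" shows "sqrt a / a = 1 / sqrt a"
proof -
  have "sqrt a * sqrt a = a" using a by simp
  then have "sqrt a / a = sqrt a / (sqrt a * sqrt a)" by simp
  also have "\<dots> = 1 / sqrt a" using a by (simp add: field_simps)
  finally show ?thesis .
qed

lemma hinf_at0:
  assumes "\<And>\<omega> u. norm (cadj (\<Phi> (\<i> * complex_of_real \<omega>)) *v u) \<le> norm (cadj (\<Phi> 0) *v u)"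
  shows "hinf_norm \<Phi> = sigma_max (\<Phi> 0)"
  unfolding hinf_norm_def
proof (rule cSup_eq_maximum)
  show "sigma_max (\<Phi> 0) \<in> range (\<lambda>\<omega>. sigma_max (\<Phi> (\<i> * complex_of_real \<omega>)))"
    by (rule range_eqI[of _ _ 0]) simp
next
  fix x assume "x \<in> range (\<lambda>\<omega>. sigma_max (\<Phi> (\<i> * complex_of_real \<omega>)))"
  then obtain \<omega> where x: "x = sigma_max (\<Phi> (\<i> * complex_of_real \<omega>))" by blast
  have "sigma_max (cadj (\<Phi> (\<i> * complex_of_real \<omega>))) \<le> sigma_max (\<Phi> 0)"
  proof (rule sigma_le)
    fix u
    have "norm (cadj (\<Phi> (\<i> * complex_of_real \<omega>)) *v u) \<le> norm (cadj (\<Phi> 0) *v u)" by (rule assms)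
    also have "\<dots> \<le> sigma_max (cadj (\<Phi> 0)) * norm u" by (rule sigma_bound)
    finally show "norm (cadj (\<Phi> (\<i> * complex_of_real \<omega>)) *v u) \<le> sigma_max (\<Phi> 0) * norm u"
      by (simp add: sigma_adj)
  qed
  then show "x \<le> sigma_max (\<Phi> 0)" by (simp add: x sigma_adj)
qed

theorem corollary2:
  fixes src tgt :: "'e::finite \<Rightarrow> 'n::finite"
    and w :: "'e \<Rightarrow> real" and eps :: "'n \<Rightarrow> real" and sw sv :: real
  assumes tree: "is_tree src tgt"
    and w_pos: "\<forall>l. w l > 0"
    and eps_pos: "\<forall>i. eps i > 0"
  defines "D \<equiv> incidence src tgt"
    and "W \<equiv> diag w"
    and "Wh \<equiv> diag (\<lambda>l. sqrt (w l))"
    and "Winv \<equiv> diag (\<lambda>l. 1 / w l)"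
    and "Einv \<equiv> diag (\<lambda>i. 1 / eps i)"
    and "Einvh \<equiv> diag (\<lambda>i. 1 / sqrt (eps i))"
  defines "L \<equiv> transpose D ** Einv ** D"
  defines "Sig \<equiv> (\<lambda>s. matrix_inv (mat s + cmat (L ** W)) **
              hcat (cmat (sw *\<^sub>R (transpose D ** Einvh))) (cmat ((- sv) *\<^sub>R (L ** Wh))))"
  defines "Pit \<equiv> (\<lambda>s. cmat Wh ** Sig s)"
  shows "(hinf_norm Sig)\<^sup>2 = sigma_max (cmat (sw\<^sup>2 *\<^sub>R matrix_inv (W ** L ** W) + sv\<^sup>2 *\<^sub>R Winv))
     \<and> (hinf_norm Pit)\<^sup>2 = sw\<^sup>2 * sigma_max (cmat (matrix_inv (Wh ** L ** Wh))) + sv\<^sup>2"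
proof -
  have nl: "\<forall>l. src l \<noteq> tgt l" using tree unfolding is_tree_def by auto
  have wp: "\<And>l. w l > 0" using w_pos by auto
  have wn: "\<And>l. w l \<noteq> 0" using wp by (metis less_irrefl)
  have ep: "\<And>i. eps i > 0" using eps_pos by auto
  have en: "\<And>i. eps i \<noteq> 0" using ep by (metis less_irrefl)
  define Whinv where "Whinv = diag (\<lambda>l. 1 / sqrt (w l))"
  have WWinv: "W ** Winv = mat 1" unfolding W_def Winv_def diag_mult by (rule diag_one) (simp add: wn)
  have WinvW: "Winv ** W = mat 1" unfolding W_def Winv_def diag_mult by (rule diag_one) (simp add: wn)
  have WhWh: "Wh ** Wh = W" unfolding W_def Wh_def diag_mult
    by (rule arg_cong[where f=diag]) (simp add: fun_eq_iff less_imp_le[OF wp])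
  have WhWhinv: "Wh ** Whinv = mat 1" unfolding Wh_def Whinv_def diag_mult
    by (rule diag_one) (simp add: wn)
  have WhinvWh: "Whinv ** Wh = mat 1" unfolding Wh_def Whinv_def diag_mult
    by (rule diag_one) (simp add: wn)
  have WhWinv: "Wh ** Winv = Whinv" unfolding Wh_def Winv_def Whinv_def diag_mult
    by (rule arg_cong[where f=diag]) (simp add: fun_eq_iff sqrt_div[OF wp] mult.commute)
  have WinvWh: "Winv ** Wh = Whinv" unfolding Wh_def Winv_def Whinv_def diag_mult
    by (rule arg_cong[where f=diag]) (simp add: fun_eq_iff sqrt_div[OF wp] mult.commute)
  have EE: "Einvh ** Einvh = Einv" unfolding Einvh_def Einv_def diag_mult
    by (rule arg_cong[where f=diag]) (simp add: fun_eq_iff less_imp_le[OF ep] real_sqrt_mult_self)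
  have WT: "transpose W = W" and WhT: "transpose Wh = Wh" and WinvT: "transpose Winv = Winv"
    and WhinvT: "transpose Whinv = Whinv" and EinvT: "transpose Einv = Einv" and EinvhT: "transpose Einvh = Einvh"
    by (simp_all add: W_def Wh_def Winv_def Whinv_def Einv_def Einvh_def)
  have LT: "transpose L = L"
    unfolding L_def by (simp add: matrix_transpose_mul EinvT matrix_mul_assoc)
  have Linj: "L *v x = 0 \<Longrightarrow> x = 0" for x
  proof -
    assume Lx: "L *v x = 0"
    let ?z = "D *v x"
    have "inner x (L *v x) = inner ?z (Einv *v ?z)"
      unfolding L_def by (simp add: matrix_vector_mul_assoc[symmetric] inner_mv_transpose[symmetric] del: transpose_matrix_vector)
    also have "\<dots> = (\<Sum>i\<in>UNIV. (?z $ i)\<^sup>2 / eps i)"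
      by (simp add: Einv_def diag_mv inner_vec_def power2_eq_square)
    finally have s0: "(\<Sum>i\<in>UNIV. (?z $ i)\<^sup>2 / eps i) = 0" using Lx by simp
    have "(?z $ i)\<^sup>2 / eps i = 0" for i
      using s0 sum_nonneg_eq_0_iff[of UNIV "\<lambda>i. (?z $ i)\<^sup>2 / eps i"] ep by (simp add: less_imp_le)
    then have "?z = 0" using en by (simp add: vec_eq_iff)
    then show "x = 0" using tree_D_inj[OF tree] unfolding D_def by blast
  qed
  have "invertible L"
    using Linj by (simp add: invertible_left_inverse matrix_left_invertible_ker)
  define Linv where "Linv = matrix_inv L"
  have LLinv: "L ** Linv = mat 1" and LinvL: "Linv ** L = mat 1"
    using invertible_inv[OF \<open>invertible L\<close>] unfolding Linv_def by auto
  have LinvT: "transpose Linv = Linv"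
  proof -
    have "transpose Linv ** L = mat 1"
      using arg_cong[OF LLinv, of transpose] by (simp add: matrix_transpose_mul LT)
    then have "transpose Linv = transpose Linv ** (L ** Linv)" using LLinv by simp
    also have "\<dots> = Linv" by (simp add: matrix_mul_assoc \<open>transpose Linv ** L = mat 1\<close>)
    finally show ?thesis .
  qed
  note cr = cancel_r[OF WWinv] cancel_r[OF WinvW] cancel_r[OF WhWhinv] cancel_r[OF WhinvWh]
    cancel_r[OF LLinv] cancel_r[OF LinvL]
  have cWhWh: "Wh ** (Wh ** X) = W ** X" for X by (simp add: matrix_mul_assoc WhWh)
  have cWhWinv: "Wh ** (Winv ** X) = Whinv ** X" for X by (simp add: matrix_mul_assoc WhWinv)
  have cWinvWh: "Winv ** (Wh ** X) = Whinv ** X" for X by (simp add: matrix_mul_assoc WinvWh)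
  have cDD: "transpose D ** (Einvh ** (Einvh ** (D ** X))) = L ** X" for X
    by (simp add: L_def matrix_mul_assoc EE)
  have cDD1: "transpose D ** (Einvh ** (Einvh ** D)) = L"
    by (simp add: L_def matrix_mul_assoc EE)
  note simps = matrix_mul_assoc[symmetric] matrix_transpose_mul WT WhT WinvT WhinvT EinvT EinvhT LT LinvT
    cr cWhWh cWhWinv cWinvWh cDD cDD1 WWinv WinvW WhWhinv WhinvWh LLinv LinvL WhWh WhWinv WinvWh
  define X1 where "X1 = sw *\<^sub>R (transpose D ** Einvh)"
  define X2 where "X2 = (- sv) *\<^sub>R (L ** Wh)"
  define Q where "Q y = sw\<^sup>2 * (norm (cmat (Einvh ** D) *v y))\<^sup>2 + sv\<^sup>2 * (norm (cmat (Wh ** L) *v y))\<^sup>2" for y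
  have SigX: "Sig s = matrix_inv (mat s + cmat (L ** W)) ** hcat (cmat X1) (cmat X2)" for s
    by (simp add: Sig_def X1_def X2_def)
  have X1T: "transpose X1 = sw *\<^sub>R (Einvh ** D)"
    by (simp add: X1_def transpose_scalar matrix_transpose_mul EinvhT)
  have X2T: "transpose X2 = (- sv) *\<^sub>R (Wh ** L)"
    by (simp only: X2_def transpose_scalar matrix_transpose_mul WhT LT)
  have normSig: "(norm (cadj (Sig s) *v u))\<^sup>2 = Q (cadj (matrix_inv (mat s + cmat (L ** W))) *v u)" for s u
  proof -
    let ?y = "cadj (matrix_inv (mat s + cmat (L ** W))) *v u"
    have "cadj (Sig s) *v u = cadj (hcat (cmat X1) (cmat X2)) *v ?y"
      by (simp add: SigX cadj_mult matrix_vector_mul_assoc)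
    then have "(norm (cadj (Sig s) *v u))\<^sup>2 = (norm (cadj (cmat X1) *v ?y))\<^sup>2 + (norm (cadj (cmat X2) *v ?y))\<^sup>2"
      by (simp add: norm_cadj_hcat)
    also have "\<dots> = Q ?y"
      by (simp only: Q_def cadj_cmat X1T X2T cmat_scaleR cmv_scaleR norm_scaleR power_mult_distrib power2_abs power2_minus)
    finally show ?thesis .
  qed
  have Pit_adj: "cadj (Pit s) *v u = cadj (Sig s) *v (cmat Wh *v u)" for s u
    by (simp add: Pit_def cadj_mult cadj_cmat WhT matrix_vector_mul_assoc)
  have inv0: "matrix_inv (cmat (L ** W)) = cmat (Winv ** Linv)"
  proof -
    have "cmat (L ** W) ** cmat (Winv ** Linv) = mat 1"
      by (simp add: cmat_mult[symmetric] simps cmat_mat1)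
    then show ?thesis by (rule minv)
  qed
  have y0: "cadj (matrix_inv (mat 0 + cmat (L ** W))) *v u = cmat (Linv ** Winv) *v u" for u
    by (simp add: mat_0 inv0 cadj_cmat simps)
  have crux: "(norm (cadj (Sig (\<i> * complex_of_real \<omega>)) *v u))\<^sup>2 \<le> (norm (cadj (Sig 0) *v u))\<^sup>2" for \<omega> u
  proof (cases "\<omega> = 0")
    case True then show ?thesis by simp
  next
    case False
    define s where "s = \<i> * complex_of_real \<omega>"
    define M where "M = mat s + cmat (L ** W)"
    have Mx: "M *v x = s *s x + cmat (L ** W) *v x" for x
      by (simp add: M_def matrix_vector_mult_add_rdistrib mat_mv)
    have Minj: "M *v x = 0 \<Longrightarrow> x = 0" for x
    proof -
      assume M0: "M *v x = 0"
      define \<alpha> where "\<alpha> = hp x (cmat W *v x)"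
      define \<beta> where "\<beta> = hp x (cmat (W ** (L ** W)) *v x)"
      have "0 = hp (cmat W *v x) (M *v x)" using M0 by (simp add: hp_def)
      also have "\<dots> = s * hp (cmat W *v x) x + hp (cmat W *v x) (cmat (L ** W) *v x)"
        by (simp add: Mx hp_add_right hp_smult_right)
      also have "hp (cmat W *v x) x = \<alpha>"
        unfolding \<alpha>_def by (metis hp_adj cadj_cmat WT)
      also have "hp (cmat W *v x) (cmat (L ** W) *v x) = \<beta>"
        unfolding \<beta>_def by (simp add: hp_cmat WT)
      finally have sab: "s * \<alpha> + \<beta> = 0" by simp
      have "transpose (W ** (L ** W)) = W ** (L ** W)"
        by (simp add: matrix_transpose_mul WT LT matrix_mul_assoc)
      then have "Im \<beta> = 0" unfolding \<beta>_def by (rule hp_sym_real)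
      moreover have a: "\<alpha> = complex_of_real (\<Sum>i\<in>UNIV. w i * (cmod (x $ i))\<^sup>2)"
        unfolding \<alpha>_def W_def by (rule hp_diag)
      moreover have "Im (s * \<alpha> + \<beta>) = 0" using sab by simp
      ultimately have "Im (s * \<alpha>) = 0" by simp
      then have "(\<Sum>i\<in>UNIV. w i * (cmod (x $ i))\<^sup>2) = 0" using False by (simp add: s_def a)
      then have "w i * (cmod (x $ i))\<^sup>2 = 0" for i
        using sum_nonneg_eq_0_iff[of UNIV "\<lambda>i. w i * (cmod (x $ i))\<^sup>2"] wp by (simp add: less_imp_le)
      then show "x = 0" using wn by (simp add: vec_eq_iff)
    qed
    have "invertible M"
      using Minj by (simp add: invertible_left_inverse matrix_left_invertible_ker)
    then have GM: "matrix_inv M ** M = mat 1" using invertible_inv by blast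
    define y where "y = cadj (matrix_inv M) *v u"
    have cadjM: "cadj M = mat (cnj s) + cmat (W ** L)"
      by (simp add: M_def cadj_add cadj_mat cadj_cmat matrix_transpose_mul WT LT)
    have "cadj M *v y = u"
    proof -
      have "cadj M *v y = cadj (matrix_inv M ** M) *v u"
        by (simp add: y_def cadj_mult matrix_vector_mul_assoc)
      then show ?thesis by (simp add: GM cadj_mat)
    qed
    then have u_eq: "u = cnj s *s y + cmat (W ** L) *v y"
      by (simp add: cadjM matrix_vector_mult_add_rdistrib mat_mv)
    define t where "t = cmat (Linv ** Winv) *v y"
    have y0_eq: "cmat (Linv ** Winv) *v u = y + cnj s *s t"
    proof -
      have "cmat (Linv ** Winv) *v u = cnj s *s t + cmat (Linv ** Winv ** (W ** L)) *v y"
        by (simp add: u_eq t_def matrix_vector_right_distrib cmv_smult cmat_mult matrix_vector_mul_assoc)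
      also have "Linv ** Winv ** (W ** L) = mat 1" by (simp add: simps)
      finally show ?thesis by (simp add: cmat_mat1 add.commute)
    qed
    have Res: "Re (cnj s) = 0" by (simp add: s_def)
    have h1: "Im (hp (cmat (Einvh ** D) *v y) (cmat (Einvh ** D) *v t)) = 0"
    proof -
      have "hp (cmat (Einvh ** D) *v y) (cmat (Einvh ** D) *v t) = hp y (cmat (transpose (Einvh ** D) ** (Einvh ** D ** (Linv ** Winv))) *v y)"
        by (simp only: t_def matrix_vector_mul_assoc cmat_mult[symmetric] hp_cmat)
      also have "transpose (Einvh ** D) ** (Einvh ** D ** (Linv ** Winv)) = Winv"
        by (simp add: simps)
      finally show ?thesis using hp_sym_real[OF WinvT] by simp
    qed
    have h2: "Im (hp (cmat (Wh ** L) *v y) (cmat (Wh ** L) *v t)) = 0"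
    proof -
      have "hp (cmat (Wh ** L) *v y) (cmat (Wh ** L) *v t) = hp y (cmat (transpose (Wh ** L) ** (Wh ** L ** (Linv ** Winv))) *v y)"
        by (simp only: t_def matrix_vector_mul_assoc cmat_mult[symmetric] hp_cmat)
      also have "transpose (Wh ** L) ** (Wh ** L ** (Linv ** Winv)) = L"
        by (simp add: simps)
      finally show ?thesis using hp_sym_real[OF LT] by simp
    qed
    have n1: "(norm (cmat (Einvh ** D) *v y))\<^sup>2 \<le> (norm (cmat (Einvh ** D) *v (y + cnj s *s t)))\<^sup>2"
      using norm_shift_ge[OF h1 Res] by (simp add: matrix_vector_right_distrib cmv_smult)
    have n2: "(norm (cmat (Wh ** L) *v y))\<^sup>2 \<le> (norm (cmat (Wh ** L) *v (y + cnj s *s t)))\<^sup>2"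
      using norm_shift_ge[OF h2 Res] by (simp add: matrix_vector_right_distrib cmv_smult)
    have "Q y \<le> Q (y + cnj s *s t)"
      unfolding Q_def using n1 n2 by (intro add_mono mult_left_mono) simp_all
    moreover have "(norm (cadj (Sig (\<i> * complex_of_real \<omega>)) *v u))\<^sup>2 = Q y"
      using normSig unfolding y_def M_def s_def by simp
    moreover have "(norm (cadj (Sig 0) *v u))\<^sup>2 = Q (y + cnj s *s t)"
      using normSig[of 0 u] y0[of u] y0_eq by simp
    ultimately show ?thesis by simp
  qed
  have crux1: "norm (cadj (Sig (\<i> * complex_of_real \<omega>)) *v u) \<le> norm (cadj (Sig 0) *v u)" for \<omega> u
    using crux[of \<omega> u] by (rule power2_le_imp_le) simp
  have crux2: "norm (cadj (Pit (\<i> * complex_of_real \<omega>)) *v u) \<le> norm (cadj (Pit 0) *v u)" for \<omega> u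
    using crux1[of \<omega> "cmat Wh *v u"] by (simp add: Pit_adj)
  have hS: "hinf_norm Sig = sigma_max (Sig 0)" by (rule hinf_at0[OF crux1])
  have hP: "hinf_norm Pit = sigma_max (Pit 0)" by (rule hinf_at0[OF crux2])
  have S0: "Sig 0 = cmat (Winv ** Linv ** hcat X1 X2)"
  proof -
    have "Sig 0 = cmat (Winv ** Linv) ** hcat (cmat X1) (cmat X2)"
      by (simp only: SigX mat_0 add_0_left inv0)
    also have "\<dots> = cmat (Winv ** Linv ** hcat X1 X2)" by (simp only: cmat_mult cmat_hcat)
    finally show ?thesis .
  qed
  have X11: "X1 ** transpose X1 = sw\<^sup>2 *\<^sub>R L"
    unfolding X1T by (simp add: X1_def matrix_scalar_ac scalar_matrix_assoc[symmetric] power2_eq_square simps)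
  have X22: "X2 ** transpose X2 = sv\<^sup>2 *\<^sub>R (L ** (W ** L))"
    unfolding X2T unfolding X2_def matrix_scalar_ac scalar_matrix_assoc[symmetric] scaleR_scaleR
    by (simp add: power2_eq_square simps)
  have RR: "(Winv ** Linv ** hcat X1 X2) ** transpose (Winv ** Linv ** hcat X1 X2) = sw\<^sup>2 *\<^sub>R (Winv ** Linv ** Winv) + sv\<^sup>2 *\<^sub>R Winv"
  proof -
    have "(Winv ** Linv ** hcat X1 X2) ** transpose (Winv ** Linv ** hcat X1 X2)
        = Winv ** (Linv ** ((hcat X1 X2 ** transpose (hcat X1 X2)) ** (Linv ** Winv)))"
      by (simp add: matrix_transpose_mul matrix_mul_assoc LinvT WinvT)
    also have "hcat X1 X2 ** transpose (hcat X1 X2) = sw\<^sup>2 *\<^sub>R L + sv\<^sup>2 *\<^sub>R (L ** (W ** L))"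
      by (simp only: hcat_T X11 X22)
    finally show ?thesis
      by (simp add: matrix_add_ldistrib matrix_add_rdistrib matrix_scalar_ac scalar_matrix_assoc[symmetric] simps)
  qed
  have invWLW: "matrix_inv (W ** L ** W) = Winv ** Linv ** Winv"
    by (rule minv) (simp add: simps)
  have claim1: "(hinf_norm Sig)\<^sup>2 = sigma_max (cmat (sw\<^sup>2 *\<^sub>R matrix_inv (W ** L ** W) + sv\<^sup>2 *\<^sub>R Winv))"
  proof -
    let ?R = "Winv ** Linv ** hcat X1 X2"
    have e1: "Sig 0 ** cadj (Sig 0) = cmat ?R ** cmat (transpose ?R)" by (simp only: S0 cadj_cmat)
    have e2: "cmat ?R ** cmat (transpose ?R) = cmat (?R ** transpose ?R)" by (rule cmat_mult[symmetric])
    have "cmat (sw\<^sup>2 *\<^sub>R matrix_inv (W ** L ** W) + sv\<^sup>2 *\<^sub>R Winv) = Sig 0 ** cadj (Sig 0)"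
      by (simp only: e1 e2 invWLW RR)
    then show ?thesis by (simp add: hS sigma_AAH)
  qed
  define Bt where "Bt = Einvh ** D ** (Linv ** Whinv)"
  have nP: "(norm (cadj (Pit 0) *v u))\<^sup>2 = sw\<^sup>2 * (norm (cmat Bt *v u))\<^sup>2 + sv\<^sup>2 * (norm u)\<^sup>2" for u
  proof -
    have yy: "cmat (Linv ** Winv) *v (cmat Wh *v u) = cmat (Linv ** Whinv) *v u"
      by (simp add: matrix_vector_mul_assoc cmat_mult[symmetric] simps)
    have a1: "cmat (Einvh ** D) *v (cmat (Linv ** Whinv) *v u) = cmat Bt *v u"
      by (simp only: Bt_def matrix_vector_mul_assoc cmat_mult[symmetric])
    have a2: "cmat (Wh ** L) *v (cmat (Linv ** Whinv) *v u) = u"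
    proof -
      have "Wh ** L ** (Linv ** Whinv) = mat 1" by (simp add: simps)
      then show ?thesis by (simp only: matrix_vector_mul_assoc cmat_mult[symmetric] cmat_mat1 matrix_vector_mul_lid)
    qed
    show ?thesis
      by (simp only: Pit_adj normSig y0 yy Q_def a1 a2)
  qed
  define sB where "sB = sigma_max (cmat Bt)"
  have sB0: "sB \<ge> 0" unfolding sB_def by (rule sigma_nonneg)
  define c where "c = sqrt (sw\<^sup>2 * sB\<^sup>2 + sv\<^sup>2)"
  have c0: "c \<ge> 0" unfolding c_def by simp
  have csq: "c\<^sup>2 = sw\<^sup>2 * sB\<^sup>2 + sv\<^sup>2" unfolding c_def by simp
  have "opn (cadj (Pit 0)) c"
    unfolding opn_def
  proof (intro conjI allI)
    show "c \<ge> 0" by (rule c0)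
  next
    fix u
    have "(norm (cmat Bt *v u))\<^sup>2 \<le> (sB * norm u)\<^sup>2"
      using sigma_bound[of "cmat Bt" u] unfolding sB_def by (simp add: power_mono)
    then have "(norm (cadj (Pit 0) *v u))\<^sup>2 \<le> sw\<^sup>2 * (sB * norm u)\<^sup>2 + sv\<^sup>2 * (norm u)\<^sup>2"
      unfolding nP by (simp add: mult_left_mono)
    also have "\<dots> = (c * norm u)\<^sup>2" by (simp add: power_mult_distrib csq algebra_simps)
    finally show "norm (cadj (Pit 0) *v u) \<le> c * norm u"
      by (rule power2_le_imp_le) (simp add: c0)
  next
    obtain v where v: "v \<noteq> 0" "norm (cmat Bt *v v) = sB * norm v"
      using opn_sigma_max[of "cmat Bt"] unfolding opn_def sB_def by blast
    have "(norm (cadj (Pit 0) *v v))\<^sup>2 = (c * norm v)\<^sup>2"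
      unfolding nP v(2) by (simp add: power_mult_distrib csq algebra_simps)
    then have "norm (cadj (Pit 0) *v v) = c * norm v"
      by (rule power2_eq_imp_eq) (simp_all add: c0)
    then show "\<exists>v. v \<noteq> 0 \<and> norm (cadj (Pit 0) *v v) = c * norm v" using v(1) by blast
  qed
  then have sP: "sigma_max (Pit 0) = c" using opn_sigma sigma_adj by metis
  have inv2: "matrix_inv (Wh ** L ** Wh) = transpose Bt ** Bt"
    by (rule minv) (simp add: Bt_def simps)
  have sBB: "sigma_max (cmat (matrix_inv (Wh ** L ** Wh))) = sB\<^sup>2"
  proof -
    have "cmat (matrix_inv (Wh ** L ** Wh)) = cadj (cmat Bt) ** cadj (cadj (cmat Bt))"
      by (simp only: inv2 cadj_cadj cadj_cmat cmat_mult[symmetric] transpose_transpose)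
    then show ?thesis by (simp only: sigma_AAH sigma_adj sB_def)
  qed
  have claim2: "(hinf_norm Pit)\<^sup>2 = sw\<^sup>2 * sigma_max (cmat (matrix_inv (Wh ** L ** Wh))) + sv\<^sup>2"
    by (simp add: hP sP csq sBB)
  show ?thesis using claim1 claim2 by blast
qed

end
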